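(* Let $G$ be a graph formed from the paw $K_{1,3}+e$ (a triangle together with one pendent edge attached to a vertex of the triangle) by subdividing the pendent edge $0$ or more times. If $L$ is a list-assignment with $|L(v)|\ge\deg(v)+1$ for all $v\in V(G)$ and $\alpha,\beta$ are unfrozen $L$-colourings, then $\alpha\sim\beta$.
   Context: An $L$-colouring is a proper colouring $\varphi$ with $\varphi(v)\in L(v)$ for all $v$. A vertex $v$ is frozen under $\varphi$ if every colour of $L(v)\setminus\{\varphi(v)\}$ appears on a neighbour of $v$; a colouring is unfrozen if at least one vertex is not frozen. $\alpha\sim\beta$ means $\alpha$ can be transformed into $\beta$ by a sequence of single-vertex recolouring steps, each keeping the colouring a proper $L$-colouring. *)

theory Defs
  imports Main
begin

text \<open>Generic graph notions: a graph is a vertex set V with a symmetric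
irreflexive adjacency relation E. Colourings are functions on vertices;
values outside V are irrelevant.\<close>

definition degree :: "'a set \<Rightarrow> ('a \<Rightarrow> 'a \<Rightarrow> bool) \<Rightarrow> 'a \<Rightarrow> nat" where
  "degree V E v = card {u \<in> V. E v u}"

definition is_L_colouring ::
  "'a set \<Rightarrow> ('a \<Rightarrow> 'a \<Rightarrow> bool) \<Rightarrow> ('a \<Rightarrow> 'c set) \<Rightarrow> ('a \<Rightarrow> 'c) \<Rightarrow> bool" where
  "is_L_colouring V E L \<phi> \<longleftrightarrow>
     (\<forall>v\<in>V. \<phi> v \<in> L v) \<and> (\<forall>u\<in>V. \<forall>v\<in>V. E u v \<longrightarrow> \<phi> u \<noteq> \<phi> v)"

definition frozen ::
  "'a set \<Rightarrow> ('a \<Rightarrow> 'a \<Rightarrow> bool) \<Rightarrow> ('a \<Rightarrow> 'c set) \<Rightarrow> ('a \<Rightarrow> 'c) \<Rightarrow> 'a \<Rightarrow> bool" where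
  "frozen V E L \<phi> v \<longleftrightarrow> (\<forall>c \<in> L v - {\<phi> v}. \<exists>u\<in>V. E v u \<and> \<phi> u = c)"

definition unfrozen ::
  "'a set \<Rightarrow> ('a \<Rightarrow> 'a \<Rightarrow> bool) \<Rightarrow> ('a \<Rightarrow> 'c set) \<Rightarrow> ('a \<Rightarrow> 'c) \<Rightarrow> bool" where
  "unfrozen V E L \<phi> \<longleftrightarrow> (\<exists>v\<in>V. \<not> frozen V E L \<phi> v)"

definition recolour_step ::
  "'a set \<Rightarrow> ('a \<Rightarrow> 'a \<Rightarrow> bool) \<Rightarrow> ('a \<Rightarrow> 'c set) \<Rightarrow> ('a \<Rightarrow> 'c) \<Rightarrow> ('a \<Rightarrow> 'c) \<Rightarrow> bool" where
  "recolour_step V E L \<phi> \<psi> \<longleftrightarrow>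
     is_L_colouring V E L \<phi> \<and> is_L_colouring V E L \<psi> \<and>
     (\<exists>v\<in>V. \<forall>u\<in>V. u \<noteq> v \<longrightarrow> \<psi> u = \<phi> u)"

definition reconf_equiv ::
  "'a set \<Rightarrow> ('a \<Rightarrow> 'a \<Rightarrow> bool) \<Rightarrow> ('a \<Rightarrow> 'c set) \<Rightarrow> ('a \<Rightarrow> 'c) \<Rightarrow> ('a \<Rightarrow> 'c) \<Rightarrow> bool" where
  "reconf_equiv V E L \<alpha> \<beta> \<longleftrightarrow> (recolour_step V E L)\<^sup>*\<^sup>* \<alpha> \<beta>"

text \<open>The paw with its pendent edge subdivided (n - 3) times, n \<ge> 3:
vertices 0..n, triangle 0,1,2, and path 2 - 3 - ... - n.\<close>
definition paw_vertices :: "nat \<Rightarrow> nat set" where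
  "paw_vertices n = {0..n}"

definition paw_adj :: "nat \<Rightarrow> nat \<Rightarrow> nat \<Rightarrow> bool" where
  "paw_adj n u v \<longleftrightarrow> u \<le> n \<and> v \<le> n \<and>
     ({u, v} = {0, 1} \<or> {u, v} = {0, 2} \<or> {u, v} = {1, 2} \<or>
      (\<exists>i. 2 \<le> i \<and> i < n \<and> {u, v} = {i, Suc i}))"

end

theory Submission
  imports Defs
begin


definition Lr :: "('a \<Rightarrow> 'a \<Rightarrow> bool) \<Rightarrow> 'a \<Rightarrow> ('a \<Rightarrow> 'c set) \<Rightarrow> 'c \<Rightarrow> 'a \<Rightarrow> 'c set" where
  "Lr E z L r x = (if E x z then L x - {r} else L x)"

lemma reconf_refl: "reconf_equiv V E L \<alpha> \<alpha>"
  by (simp add: reconf_equiv_def)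

lemma reconf_trans: "reconf_equiv V E L \<alpha> \<beta> \<Longrightarrow> reconf_equiv V E L \<beta> \<gamma> \<Longrightarrow> reconf_equiv V E L \<alpha> \<gamma>"
  unfolding reconf_equiv_def by (rule rtranclp_trans)

lemma reconf_step: "recolour_step V E L \<alpha> \<beta> \<Longrightarrow> reconf_equiv V E L \<alpha> \<beta>"
  unfolding reconf_equiv_def by (rule r_into_rtranclp)

lemma step_sym: "recolour_step V E L \<phi> \<psi> \<Longrightarrow> recolour_step V E L \<psi> \<phi>"
  unfolding recolour_step_def by metis

lemma rtranclp_sym_aux: "r\<^sup>*\<^sup>* a b \<Longrightarrow> (\<And>x y. r x y \<Longrightarrow> r y x) \<Longrightarrow> r\<^sup>*\<^sup>* b a"
  by (induction rule: rtranclp_induct) (auto intro: converse_rtranclp_into_rtranclp)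

lemma reconf_sym: "reconf_equiv V E L \<alpha> \<beta> \<Longrightarrow> reconf_equiv V E L \<beta> \<alpha>"
  unfolding reconf_equiv_def by (erule rtranclp_sym_aux) (erule step_sym)

lemma col_lift:
  assumes sym: "\<forall>x\<in>V. \<forall>y\<in>V. E x y = E y x" and irr: "\<not> E z z" and rL: "r \<in> L z"
    and c: "is_L_colouring (V - {z}) E (Lr E z L r) \<chi>"
  shows "is_L_colouring V E L (\<chi>(z := r))"
  using c rL irr sym unfolding is_L_colouring_def Lr_def
  by (auto split: if_splits)

lemma lift_step:
  assumes sym: "\<forall>x\<in>V. \<forall>y\<in>V. E x y = E y x" and irr: "\<not> E z z" and rL: "r \<in> L z"
    and st: "recolour_step (V - {z}) E (Lr E z L r) \<chi> \<chi>'"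
  shows "recolour_step V E L (\<chi>(z := r)) (\<chi>'(z := r))"
proof -
  from st obtain v where v: "v \<in> V - {z}" "\<forall>u\<in>V - {z}. u \<noteq> v \<longrightarrow> \<chi>' u = \<chi> u"
    and c1: "is_L_colouring (V - {z}) E (Lr E z L r) \<chi>" and c2: "is_L_colouring (V - {z}) E (Lr E z L r) \<chi>'"
    unfolding recolour_step_def by blast
  show ?thesis unfolding recolour_step_def
    using col_lift[OF sym irr rL c1] col_lift[OF sym irr rL c2] v by auto
qed

lemma lift_reconf:
  assumes rc: "reconf_equiv (V - {z}) E (Lr E z L r) \<psi>1 \<psi>2"
    and sym: "\<forall>x\<in>V. \<forall>y\<in>V. E x y = E y x" and irr: "\<not> E z z" and rL: "r \<in> L z"
  shows "reconf_equiv V E L (\<psi>1(z := r)) (\<psi>2(z := r))"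
  using rc unfolding reconf_equiv_def
proof (induction rule: rtranclp_induct)
  case base then show ?case by simp
next
  case (step y w)
  then show ?case using lift_step[OF sym irr rL step(2)] by (meson rtranclp.rtrancl_into_rtrancl)
qed

lemma frozen_equiv:
  assumes sym: "\<forall>x\<in>V. \<forall>y\<in>V. E x y = E y x" and xV: "x \<in> V" "x \<noteq> z" and zV: "z \<in> V"
  shows "frozen V E L \<alpha> x \<longleftrightarrow> frozen (V - {z}) E (Lr E z L (\<alpha> z)) \<alpha> x"
proof (cases "E x z")
  case True
  have "(\<forall>c\<in>L x - {\<alpha> x}. \<exists>u\<in>V. E x u \<and> \<alpha> u = c) \<longleftrightarrow> (\<forall>c\<in>L x - {\<alpha> z} - {\<alpha> x}. \<exists>u\<in>V - {z}. E x u \<and> \<alpha> u = c)"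
  proof
    assume h: "\<forall>c\<in>L x - {\<alpha> x}. \<exists>u\<in>V. E x u \<and> \<alpha> u = c"
    show "\<forall>c\<in>L x - {\<alpha> z} - {\<alpha> x}. \<exists>u\<in>V - {z}. E x u \<and> \<alpha> u = c"
    proof
      fix c assume c: "c \<in> L x - {\<alpha> z} - {\<alpha> x}"
      then obtain u where "u \<in> V" "E x u" "\<alpha> u = c" using h by blast
      then show "\<exists>u\<in>V - {z}. E x u \<and> \<alpha> u = c" using c by auto
    qed
  next
    assume h: "\<forall>c\<in>L x - {\<alpha> z} - {\<alpha> x}. \<exists>u\<in>V - {z}. E x u \<and> \<alpha> u = c"
    show "\<forall>c\<in>L x - {\<alpha> x}. \<exists>u\<in>V. E x u \<and> \<alpha> u = c"
    proof
      fix c assume c: "c \<in> L x - {\<alpha> x}"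
      show "\<exists>u\<in>V. E x u \<and> \<alpha> u = c"
      proof (cases "c = \<alpha> z")
        case True then show ?thesis using zV \<open>E x z\<close> by blast
      next
        case False then show ?thesis using h c by blast
      qed
    qed
  qed
  then show ?thesis unfolding frozen_def Lr_def using True by simp
next
  case False
  have eq: "\<And>c. (\<exists>u\<in>V. E x u \<and> \<alpha> u = c) = (\<exists>u\<in>V - {z}. E x u \<and> \<alpha> u = c)"
    using False by blast
  show ?thesis unfolding frozen_def Lr_def using False by (simp add: eq)
qed

lemma degree_remove:
  assumes fin: "finite V" and xV: "x \<in> V" and zV: "z \<in> V"
  shows "degree V E x = degree (V - {z}) E x + (if E x z then 1 else 0)"
proof (cases "E x z")
  case True
  have "{u \<in> V. E x u} = insert z {u \<in> V - {z}. E x u}" using True zV by auto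
  then show ?thesis unfolding degree_def using True fin by simp
next
  case False
  have "{u \<in> V. E x u} = {u \<in> V - {z}. E x u}" using False by auto
  then show ?thesis unfolding degree_def using False by simp
qed

lemma frozen_cong:
  assumes "\<forall>y\<in>W. \<phi> y = \<phi>' y" "x \<in> W"
  shows "frozen W E L \<phi> x = frozen W E L \<phi>' x"
  using assms unfolding frozen_def by auto

lemma unfrozen_cong:
  assumes "\<forall>y\<in>W. \<phi> y = \<phi>' y"
  shows "unfrozen W E L \<phi> = unfrozen W E L \<phi>'"
  using assms frozen_cong[OF assms] unfolding unfrozen_def by metis

lemma col_cong:
  assumes "\<forall>y\<in>W. \<phi> y = \<phi>' y"
  shows "is_L_colouring W E L \<phi> = is_L_colouring W E L \<phi>'"
  using assms unfolding is_L_colouring_def by auto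

lemma remove_vertex:
  fixes V :: "'a set" and E :: "'a \<Rightarrow> 'a \<Rightarrow> bool" and L :: "'a \<Rightarrow> 'c set"
  assumes finV: "finite V" and zV: "z \<in> V" and sym: "\<forall>x\<in>V. \<forall>y\<in>V. E x y = E y x"
    and irr: "\<not> E z z" and nb: "\<exists>x\<in>V. E z x"
    and lists: "\<forall>v\<in>V. finite (L v) \<and> degree V E v + 1 \<le> card (L v)"
    and TH: "\<forall>L'::'a \<Rightarrow> 'c set. (\<forall>v\<in>V-{z}. finite (L' v) \<and> degree (V-{z}) E v + 1 \<le> card (L' v)) \<longrightarrow>
       (\<forall>\<alpha> \<beta>. is_L_colouring (V-{z}) E L' \<alpha> \<longrightarrow> is_L_colouring (V-{z}) E L' \<beta> \<longrightarrow>
         unfrozen (V-{z}) E L' \<alpha> \<longrightarrow> unfrozen (V-{z}) E L' \<beta> \<longrightarrow> reconf_equiv (V-{z}) E L' \<alpha> \<beta>)"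
    and conn: "\<forall>r\<in>L z. \<forall>r'\<in>L z. r \<noteq> r' \<longrightarrow>
       (\<exists>\<psi>. is_L_colouring (V-{z}) E (Lr E z L r) \<psi> \<and> unfrozen (V-{z}) E (Lr E z L r) \<psi>) \<longrightarrow>
       (\<exists>\<psi>. is_L_colouring (V-{z}) E (Lr E z L r') \<psi> \<and> unfrozen (V-{z}) E (Lr E z L r') \<psi>) \<longrightarrow>
       (\<exists>\<psi>. is_L_colouring (V-{z}) E (Lr E z L r) \<psi> \<and> unfrozen (V-{z}) E (Lr E z L r) \<psi> \<and>
            is_L_colouring (V-{z}) E (Lr E z L r') \<psi> \<and> unfrozen (V-{z}) E (Lr E z L r') \<psi>)"
    and ca: "is_L_colouring V E L \<alpha>" and cb: "is_L_colouring V E L \<beta>"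
    and ua: "unfrozen V E L \<alpha>" and ub: "unfrozen V E L \<beta>"
  shows "reconf_equiv V E L \<alpha> \<beta>"
proof -
  let ?W = "V - {z}"
  define good where "good = (\<lambda>r \<psi>. r \<in> L z \<and> is_L_colouring ?W E (Lr E z L r) \<psi> \<and> unfrozen ?W E (Lr E z L r) \<psi>)"
  have THr: "reconf_equiv ?W E (Lr E z L r) \<psi>1 \<psi>2" if "good r \<psi>1" "good r \<psi>2" for r \<psi>1 \<psi>2
  proof -
    have "\<forall>v\<in>?W. finite (Lr E z L r v) \<and> degree ?W E v + 1 \<le> card (Lr E z L r v)"
    proof
      fix v assume v: "v \<in> ?W"
      have fv: "finite (L v)" and dv: "degree V E v + 1 \<le> card (L v)" using lists v by auto
      have dr: "degree V E v = degree ?W E v + (if E v z then 1 else 0)"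
        using degree_remove[OF finV _ zV] v by auto
      show "finite (Lr E z L r v) \<and> degree ?W E v + 1 \<le> card (Lr E z L r v)"
      proof (cases "E v z")
        case True
        have "card (L v) - 1 \<le> card (L v - {r})" by (simp add: card_Diff_singleton_if fv)
        then show ?thesis using True fv dv dr unfolding Lr_def by auto
      next
        case False then show ?thesis using fv dv dr unfolding Lr_def by auto
      qed
    qed
    then show ?thesis using TH that unfolding good_def by blast
  qed
  have K: "\<exists>\<alpha>'. reconf_equiv V E L \<gamma> \<alpha>' \<and> is_L_colouring V E L \<alpha>' \<and> good (\<alpha>' z) \<alpha>'"
    if cg: "is_L_colouring V E L \<gamma>" and ug: "unfrozen V E L \<gamma>" for \<gamma>
  proof -
    let ?r = "\<gamma> z"
    have rL: "?r \<in> L z" using cg zV unfolding is_L_colouring_def by blast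
    have colr: "is_L_colouring ?W E (Lr E z L ?r) \<gamma>"
      using cg zV unfolding is_L_colouring_def Lr_def by auto
    show ?thesis
    proof (cases "unfrozen ?W E (Lr E z L ?r) \<gamma>")
      case True then show ?thesis using reconf_refl colr rL cg unfolding good_def by blast
    next
      case False
      have allfr: "\<forall>x\<in>?W. frozen ?W E (Lr E z L ?r) \<gamma> x" using False unfolding unfrozen_def by blast
      have "\<not> frozen V E L \<gamma> z"
      proof
        assume fz: "frozen V E L \<gamma> z"
        have "\<forall>x\<in>V. frozen V E L \<gamma> x"
        proof
          fix x assume xV: "x \<in> V"
          show "frozen V E L \<gamma> x"
          proof (cases "x = z")
            case True then show ?thesis using fz by simp
          next
            case False then show ?thesis using frozen_equiv[OF sym xV False zV] allfr xV by blast
          qed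
        qed
        then show False using ug unfolding unfrozen_def by blast
      qed
      then obtain r' where r': "r' \<in> L z" "r' \<noteq> ?r" and free: "\<forall>y\<in>V. E z y \<longrightarrow> \<gamma> y \<noteq> r'"
        unfolding frozen_def by blast
      define \<alpha>' where "\<alpha>' = \<gamma>(z := r')"
      have agree: "\<forall>y\<in>?W. \<alpha>' y = \<gamma> y" unfolding \<alpha>'_def by auto
      have ca': "is_L_colouring V E L \<alpha>'"
        using cg r' free sym irr zV unfolding is_L_colouring_def \<alpha>'_def fun_upd_apply by (auto; metis)
      have st: "recolour_step V E L \<gamma> \<alpha>'" unfolding recolour_step_def using cg ca' zV \<alpha>'_def by auto
      have colr'0: "is_L_colouring ?W E (Lr E z L r') \<gamma>"
        using cg free sym zV unfolding is_L_colouring_def Lr_def by auto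
      have colr': "is_L_colouring ?W E (Lr E z L r') \<alpha>'"
        using colr'0 col_cong[OF agree] by simp
      have unf0: "unfrozen ?W E (Lr E z L r') \<gamma>"
      proof (rule ccontr)
        assume "\<not> ?thesis"
        then have fr': "\<forall>x\<in>?W. frozen ?W E (Lr E z L r') \<gamma> x" unfolding unfrozen_def by blast
        obtain x where x: "x \<in> V" "E z x" using nb by blast
        have xz: "x \<noteq> z" using x irr by auto
        have Exz: "E x z" using sym x zV by auto
        have xW: "x \<in> ?W" using x xz by auto
        have f1: "frozen ?W E (Lr E z L ?r) \<gamma> x" using allfr xW by blast
        have f2: "frozen ?W E (Lr E z L r') \<gamma> x" using fr' xW by blast
        let ?N = "\<gamma> ` {y \<in> ?W. E x y}"
        have sub: "L x - {\<gamma> x} \<subseteq> ?N"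
        proof
          fix c assume c: "c \<in> L x - {\<gamma> x}"
          show "c \<in> ?N"
          proof (cases "c = ?r")
            case True
            then have "c \<in> Lr E z L r' x - {\<gamma> x}" using c r' Exz unfolding Lr_def by auto
            then obtain y where "y \<in> ?W" "E x y" "\<gamma> y = c" using f2 unfolding frozen_def by blast
            then show ?thesis by blast
          next
            case False
            then have "c \<in> Lr E z L ?r x - {\<gamma> x}" using c Exz unfolding Lr_def by auto
            then obtain y where "y \<in> ?W" "E x y" "\<gamma> y = c" using f1 unfolding frozen_def by blast
            then show ?thesis by blast
          qed
        qed
        have fx: "finite (L x)" and dx: "degree V E x + 1 \<le> card (L x)" using lists x by auto
        have gx: "\<gamma> x \<in> L x" using cg x unfolding is_L_colouring_def by blast
        have dr: "degree V E x = degree ?W E x + 1" using degree_remove[OF finV x(1) zV] Exz by simp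
        have "card (L x - {\<gamma> x}) = card (L x) - 1" using gx fx by simp
        moreover have "card (L x - {\<gamma> x}) \<le> card ?N" using sub finV by (intro card_mono) auto
        moreover have "card ?N \<le> degree ?W E x" unfolding degree_def by (rule card_image_le) (use finV in auto)
        ultimately show False using dx dr by linarith
      qed
      have unf': "unfrozen ?W E (Lr E z L r') \<alpha>'" using unf0 unfrozen_cong[OF agree] by simp
      have "\<alpha>' z = r'" unfolding \<alpha>'_def by simp
      then show ?thesis using reconf_step[OF st] r' colr' unf' ca' unfolding good_def by metis
    qed
  qed
  obtain \<alpha>' where a1: "reconf_equiv V E L \<alpha> \<alpha>'" "good (\<alpha>' z) \<alpha>'" using K[OF ca ua] by blast
  obtain \<beta>' where b1: "reconf_equiv V E L \<beta> \<beta>'" "good (\<beta>' z) \<beta>'" using K[OF cb ub] by blast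
  have liftc: "reconf_equiv V E L (\<psi>1(z:=r)) (\<psi>2(z:=r))"
    if "reconf_equiv ?W E (Lr E z L r) \<psi>1 \<psi>2" "r \<in> L z" for \<psi>1 \<psi>2 r
    using lift_reconf[OF that(1) sym irr that(2)] .
  have mid: "reconf_equiv V E L \<alpha>' \<beta>'"
  proof (cases "\<alpha>' z = \<beta>' z")
    case True
    have "reconf_equiv ?W E (Lr E z L (\<alpha>' z)) \<alpha>' \<beta>'" using THr a1(2) b1(2) True by metis
    then have "reconf_equiv V E L (\<alpha>'(z := \<alpha>' z)) (\<beta>'(z := \<alpha>' z))" using liftc a1(2) unfolding good_def by blast
    moreover have "\<beta>'(z := \<alpha>' z) = \<beta>'" using True by simp
    ultimately show ?thesis by simp
  next
    case False
    obtain \<psi> where \<psi>: "good (\<alpha>' z) \<psi>" "good (\<beta>' z) \<psi>"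
      using conn a1(2) b1(2) False unfolding good_def by blast
    have h1: "reconf_equiv V E L (\<alpha>'(z := \<alpha>' z)) (\<psi>(z := \<alpha>' z))"
      using THr[OF a1(2) \<psi>(1)] liftc a1(2) unfolding good_def by blast
    have h2: "reconf_equiv V E L (\<psi>(z := \<beta>' z)) (\<beta>'(z := \<beta>' z))"
      using THr[OF \<psi>(2) b1(2)] liftc b1(2) unfolding good_def by blast
    have h3: "recolour_step V E L (\<psi>(z := \<alpha>' z)) (\<psi>(z := \<beta>' z))"
      unfolding recolour_step_def
      using col_lift[OF sym irr, of "\<alpha>' z" L \<psi>] col_lift[OF sym irr, of "\<beta>' z" L \<psi>] \<psi> zV
      unfolding good_def by auto
    have "reconf_equiv V E L \<alpha>' (\<psi>(z := \<beta>' z))" using h1 reconf_step[OF h3] reconf_trans by fastforce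
    then show ?thesis using h2 reconf_trans by fastforce
  qed
  show ?thesis using a1(1) mid b1(1) reconf_sym reconf_trans by metis
qed




definition adjP :: "nat \<Rightarrow> nat \<Rightarrow> bool" where
  "adjP x y \<longleftrightarrow> (x \<noteq> y \<and> x \<le> 2 \<and> y \<le> 2) \<or> (2 \<le> x \<and> y = Suc x) \<or> (2 \<le> y \<and> x = Suc y)"

lemma paw_adj_eq: "paw_adj n x y \<longleftrightarrow> x \<le> n \<and> y \<le> n \<and> adjP x y"
proof -
  have d: "\<And>a b c d::nat. {a, b} = {c, d} \<longleftrightarrow> (a = c \<and> b = d) \<or> (a = d \<and> b = c)"
    by (auto simp: doubleton_eq_iff)
  show ?thesis unfolding paw_adj_def adjP_def d
    by (rule iffI; elim conjE disjE exE; auto; presburger?)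
qed

lemma adjP_sym: "adjP x y = adjP y x" unfolding adjP_def by auto
lemma adjP_irr: "\<not> adjP x x" unfolding adjP_def by auto

lemma adj_top: "2 \<le> k \<Longrightarrow> v \<le> Suc k \<Longrightarrow> adjP (Suc k) v \<longleftrightarrow> v = k"
  unfolding adjP_def by auto

lemma adj_top': "2 \<le> k \<Longrightarrow> v \<le> Suc k \<Longrightarrow> adjP v (Suc k) \<longleftrightarrow> v = k"
  using adj_top adjP_sym by metis

lemma adj_mid: "3 \<le> x \<Longrightarrow> adjP x y \<longleftrightarrow> y = x - 1 \<or> y = Suc x"
  unfolding adjP_def by auto

lemma col_single: "is_L_colouring {0} adjP L \<psi> \<longleftrightarrow> \<psi> 0 \<in> L 0"
  unfolding is_L_colouring_def by (auto simp: adjP_irr)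

lemma unfrozen_single: "unfrozen {0} adjP L \<psi> \<longleftrightarrow> (\<exists>c\<in>L 0. c \<noteq> \<psi> 0)"
  unfolding unfrozen_def frozen_def by (auto simp: adjP_irr)

lemma two_eq: "{0..1::nat} = {0,1}" by auto
lemma three_eq: "{0..2::nat} = {0,1,2}" by auto

lemma col_edge: "is_L_colouring {0..1} adjP L \<psi> \<longleftrightarrow> \<psi> 0 \<in> L 0 \<and> \<psi> 1 \<in> L 1 \<and> \<psi> 0 \<noteq> \<psi> 1"
  unfolding is_L_colouring_def two_eq by (auto simp: adjP_def)

lemma unfrozen_edge: "unfrozen {0..1} adjP L \<psi> \<longleftrightarrow>
   (\<exists>c. (c \<in> L 0 \<or> c \<in> L 1) \<and> c \<noteq> \<psi> 0 \<and> c \<noteq> \<psi> 1)"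
  unfolding unfrozen_def frozen_def two_eq by (auto simp: adjP_def)

lemma col_K3: "is_L_colouring {0..2} adjP L \<psi> \<longleftrightarrow> \<psi> 0 \<in> L 0 \<and> \<psi> 1 \<in> L 1 \<and> \<psi> 2 \<in> L 2 \<and>
   \<psi> 0 \<noteq> \<psi> 1 \<and> \<psi> 0 \<noteq> \<psi> 2 \<and> \<psi> 1 \<noteq> \<psi> 2"
  unfolding is_L_colouring_def three_eq by (auto simp: adjP_def)

lemma unfrozen_K3: "unfrozen {0..2} adjP L \<psi> \<longleftrightarrow>
   (\<exists>c. (c \<in> L 0 \<or> c \<in> L 1 \<or> c \<in> L 2) \<and> c \<noteq> \<psi> 0 \<and> c \<noteq> \<psi> 1 \<and> c \<noteq> \<psi> 2)"
  unfolding unfrozen_def frozen_def three_eq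
  apply (auto simp: adjP_def)
  apply (metis DiffI singletonD)+
  done

lemma pick1: "finite A \<Longrightarrow> 2 \<le> card A \<Longrightarrow> \<exists>x\<in>A. x \<noteq> a"
  by (metis card_le_Suc0_iff_eq numeral_2_eq_2 not_less_eq_eq)

lemma pick2: "finite A \<Longrightarrow> 3 \<le> card A \<Longrightarrow> \<exists>x\<in>A. x \<noteq> a \<and> x \<noteq> b"
proof (rule ccontr)
  assume f: "finite A" and c: "3 \<le> card A" and n: "\<not> (\<exists>x\<in>A. x \<noteq> a \<and> x \<noteq> b)"
  then have "A \<subseteq> {a, b}" by auto
  then have "card A \<le> card {a, b}" by (intro card_mono) auto
  also have "\<dots> \<le> 2" by (simp add: card_insert_le_m1)
  finally show False using c by simp
qed

lemma pick3: "finite A \<Longrightarrow> 4 \<le> card A \<Longrightarrow> \<exists>x\<in>A. x \<noteq> a \<and> x \<noteq> b \<and> x \<noteq> c"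
proof (rule ccontr)
  assume f: "finite A" and c: "4 \<le> card A" and n: "\<not> (\<exists>x\<in>A. x \<noteq> a \<and> x \<noteq> b \<and> x \<noteq> c)"
  then have "A \<subseteq> {a, b, c}" by auto
  then have "card A \<le> card {a, b, c}" by (intro card_mono) auto
  also have "\<dots> \<le> 3" by (simp add: card_insert_le_m1)
  finally show False using c by simp
qed

lemma col_extend:
  assumes c: "is_L_colouring {0..k} adjP L \<psi>" and k: "2 \<le> k" and cL: "c \<in> L (Suc k)" and ne: "c \<noteq> \<psi> k"
  shows "is_L_colouring {0..Suc k} adjP L (\<psi>(Suc k := c))"
proof -
  have "\<forall>v\<in>{0..Suc k}. (\<psi>(Suc k := c)) v \<in> L v" using c cL unfolding is_L_colouring_def
    by (auto simp: le_Suc_eq)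
  moreover have "\<forall>u\<in>{0..Suc k}. \<forall>v\<in>{0..Suc k}. adjP u v \<longrightarrow> (\<psi>(Suc k := c)) u \<noteq> (\<psi>(Suc k := c)) v"
  proof (intro ballI impI)
    fix u v assume u: "u \<in> {0..Suc k}" and v: "v \<in> {0..Suc k}" and a: "adjP u v"
    show "(\<psi>(Suc k := c)) u \<noteq> (\<psi>(Suc k := c)) v"
    proof (cases "u = Suc k")
      case True
      then have "v = k" using adj_top[OF k] v a by auto
      then show ?thesis using True ne by auto
    next
      case False
      note uF = False
      show ?thesis
      proof (cases "v = Suc k")
        case True
        then have "u = k" using adj_top'[OF k] u a by auto
        then show ?thesis using True ne by auto
      next
        case False
        then show ?thesis using uF u v a c unfolding is_L_colouring_def by (auto simp: le_Suc_eq)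
      qed
    qed
  qed
  ultimately show ?thesis unfolding is_L_colouring_def by blast
qed

lemma ext_col:
  assumes "2 \<le> k" shows "(\<forall>x\<le>k. finite (L x) \<and> 3 \<le> card (L x)) \<longrightarrow> (\<forall>c\<in>L k. \<exists>\<psi>. is_L_colouring {0..k} adjP L \<psi> \<and> \<psi> k = c)"
  using assms
proof (induction k rule: dec_induct)
  case base
  show ?case
  proof (intro impI ballI)
    fix c assume h: "\<forall>x\<le>2. finite (L x) \<and> 3 \<le> card (L x)" and c: "c \<in> L 2"
    obtain a where a: "a \<in> L 0" "a \<noteq> c" using pick2[of "L 0" c c] h by auto
    obtain b where b: "b \<in> L 1" "b \<noteq> c" "b \<noteq> a" using pick2[of "L 1" c a] h by auto
    let ?\<psi> = "\<lambda>i::nat. if i = 0 then a else if i = 1 then b else c"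
    have "is_L_colouring {0..2} adjP L ?\<psi>" unfolding col_K3 using a b c by auto
    then show "\<exists>\<psi>. is_L_colouring {0..2} adjP L \<psi> \<and> \<psi> 2 = c" by force
  qed
next
  case (step k)
  show ?case
  proof (intro impI ballI)
    fix c assume h: "\<forall>x\<le>Suc k. finite (L x) \<and> 3 \<le> card (L x)" and c: "c \<in> L (Suc k)"
    obtain d where d: "d \<in> L k" "d \<noteq> c" using pick2[of "L k" c c] h by auto
    obtain \<psi> where \<psi>: "is_L_colouring {0..k} adjP L \<psi>" "\<psi> k = d" using step.IH h d by auto
    have "is_L_colouring {0..Suc k} adjP L (\<psi>(Suc k := c))"
      using col_extend[OF \<psi>(1) step.hyps(1) c] d \<psi>(2) by auto
    then show "\<exists>\<psi>. is_L_colouring {0..Suc k} adjP L \<psi> \<and> \<psi> (Suc k) = c" by force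
  qed
qed

lemma deg_lb2:
  assumes N: "2 \<le> N" and x: "x \<le> N" and xx: "x \<le> 2 \<or> x < N"
  shows "2 \<le> degree {0..N} adjP x"
proof -
  obtain a b where ab: "a \<noteq> b" "a \<le> N" "b \<le> N" "adjP x a" "adjP x b"
  proof (cases "x \<le> 2")
    case True
    then consider "x = 0" | "x = 1" | "x = 2" by linarith
    then show ?thesis
    proof cases
      case 1 then show ?thesis using that[of 1 2] N by (auto simp: adjP_def)
    next
      case 2 then show ?thesis using that[of 0 2] N by (auto simp: adjP_def)
    next
      case 3 then show ?thesis using that[of 0 1] N by (auto simp: adjP_def)
    qed
  next
    case False
    then show ?thesis using that[of "x - 1" "Suc x"] xx x by (auto simp: adjP_def)
  qed
  then have "{a, b} \<subseteq> {u \<in> {0..N}. adjP x u}" by auto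
  then have "card {a, b} \<le> degree {0..N} adjP x" unfolding degree_def by (intro card_mono) auto
  then show ?thesis using ab by simp
qed

lemma deg_lb3:
  assumes N: "3 \<le> N" shows "3 \<le> degree {0..N} adjP 2"
proof -
  have "{0, 1, 3} \<subseteq> {u \<in> {0..N}. adjP 2 u}" using N by (auto simp: adjP_def)
  then have "card {0::nat, 1, 3} \<le> degree {0..N} adjP 2" unfolding degree_def by (intro card_mono) auto
  then show ?thesis by simp
qed




lemma unfrozenI:
  assumes "v \<in> W" "c \<in> L v" "c \<noteq> \<psi> v" "\<forall>y\<in>W. E v y \<longrightarrow> \<psi> y \<noteq> c"
  shows "unfrozen W E L \<psi>"
  using assms unfolding unfrozen_def frozen_def by blast

lemma bad2:
  assumes "x0 \<in> A" "x1 \<in> B" "x0 \<noteq> x1" "c \<in> A \<or> c \<in> B" "c \<noteq> x0" "c \<noteq> x1"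
  shows "\<exists>c'. (c' \<in> A \<or> c' \<in> B) \<and> c' \<noteq> p \<and> c' \<noteq> q"
  using assms by blast

lemma bad3:
  assumes "x0 \<in> A0" "x1 \<in> A1" "x2 \<in> A2" "x0 \<noteq> x1" "x0 \<noteq> x2" "x1 \<noteq> x2"
    "c \<in> A0 \<or> c \<in> A1 \<or> c \<in> A2" "c \<noteq> x0" "c \<noteq> x1" "c \<noteq> x2"
  shows "\<exists>c'. (c' \<in> A0 \<or> c' \<in> A1 \<or> c' \<in> A2) \<and> c' \<noteq> p \<and> c' \<noteq> q \<and> c' \<noteq> s"
proof (rule ccontr)
  assume "\<not> ?thesis"
  then have "{x0, x1, x2, c} \<subseteq> {p, q, s}" using assms by blast
  then have "card {x0, x1, x2, c} \<le> card {p, q, s}" by (intro card_mono) auto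
  also have "\<dots> \<le> 3" by (simp add: card_insert_le_m1)
  finally show False using assms by simp
qed

lemma T_single:
  "\<forall>L'::nat \<Rightarrow> 'c set. (\<forall>v\<in>{0}. finite (L' v) \<and> degree {0} adjP v + 1 \<le> card (L' v)) \<longrightarrow>
     (\<forall>\<alpha> \<beta>. is_L_colouring {0} adjP L' \<alpha> \<longrightarrow> is_L_colouring {0} adjP L' \<beta> \<longrightarrow>
       unfrozen {0} adjP L' \<alpha> \<longrightarrow> unfrozen {0} adjP L' \<beta> \<longrightarrow> reconf_equiv {0} adjP L' \<alpha> \<beta>)"
proof (intro allI impI)
  fix L' :: "nat \<Rightarrow> 'c set" and \<alpha> \<beta>
  assume "is_L_colouring {0} adjP L' \<alpha>" "is_L_colouring {0} adjP L' \<beta>"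
  then have "recolour_step {0} adjP L' \<alpha> \<beta>" unfolding recolour_step_def by auto
  then show "reconf_equiv {0} adjP L' \<alpha> \<beta>" by (rule reconf_step)
qed

lemma T_edge:
  "\<forall>L'::nat \<Rightarrow> 'c set. (\<forall>v\<in>{0..1}. finite (L' v) \<and> degree {0..1} adjP v + 1 \<le> card (L' v)) \<longrightarrow>
     (\<forall>\<alpha> \<beta>. is_L_colouring {0..1} adjP L' \<alpha> \<longrightarrow> is_L_colouring {0..1} adjP L' \<beta> \<longrightarrow>
       unfrozen {0..1} adjP L' \<alpha> \<longrightarrow> unfrozen {0..1} adjP L' \<beta> \<longrightarrow> reconf_equiv {0..1} adjP L' \<alpha> \<beta>)"
proof (intro allI impI)
  fix L :: "nat \<Rightarrow> 'c set" and \<alpha> \<beta>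
  assume lists: "\<forall>v\<in>{0..1}. finite (L v) \<and> degree {0..1} adjP v + 1 \<le> card (L v)"
    and ca: "is_L_colouring {0..1} adjP L \<alpha>" and cb: "is_L_colouring {0..1} adjP L \<beta>"
    and ua: "unfrozen {0..1} adjP L \<alpha>" and ub: "unfrozen {0..1} adjP L \<beta>"
  have e: "{0..1::nat} - {1} = {0}" by auto
  note rv = remove_vertex[of "{0..1}" 1 adjP L, unfolded e]
  have Lr0: "\<And>r. Lr adjP 1 L r 0 = L 0 - {r}" by (simp add: Lr_def adjP_def)
  have conn: "\<forall>r\<in>L 1. \<forall>r'\<in>L 1. r \<noteq> r' \<longrightarrow>
       (\<exists>\<psi>. is_L_colouring {0} adjP (Lr adjP 1 L r) \<psi> \<and> unfrozen {0} adjP (Lr adjP 1 L r) \<psi>) \<longrightarrow>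
       (\<exists>\<psi>. is_L_colouring {0} adjP (Lr adjP 1 L r') \<psi> \<and> unfrozen {0} adjP (Lr adjP 1 L r') \<psi>) \<longrightarrow>
       (\<exists>\<psi>. is_L_colouring {0} adjP (Lr adjP 1 L r) \<psi> \<and> unfrozen {0} adjP (Lr adjP 1 L r) \<psi> \<and>
            is_L_colouring {0} adjP (Lr adjP 1 L r') \<psi> \<and> unfrozen {0} adjP (Lr adjP 1 L r') \<psi>)"
  proof (intro ballI impI)
    fix r r' assume rr: "r \<noteq> r'"
      and h1: "\<exists>\<psi>. is_L_colouring {0} adjP (Lr adjP 1 L r) \<psi> \<and> unfrozen {0} adjP (Lr adjP 1 L r) \<psi>"
      and h2: "\<exists>\<psi>. is_L_colouring {0} adjP (Lr adjP 1 L r') \<psi> \<and> unfrozen {0} adjP (Lr adjP 1 L r') \<psi>"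
    obtain a c where ac: "a \<in> L 0 - {r}" "c \<in> L 0 - {r}" "a \<noteq> c"
      using h1 unfolding col_single unfrozen_single Lr0 by blast
    obtain b d where bd: "b \<in> L 0 - {r'}" "d \<in> L 0 - {r'}" "b \<noteq> d"
      using h2 unfolding col_single unfrozen_single Lr0 by blast
    obtain x where x: "x \<in> L 0 - {r}" "x \<in> L 0 - {r'}" "\<exists>y\<in>L 0 - {r}. y \<noteq> x" "\<exists>y\<in>L 0 - {r'}. y \<noteq> x"
    proof (cases "a = r'")
      case True then show ?thesis using that[of c] ac bd by (metis DiffD1 DiffD2 DiffI insertCI singletonD)
    next
      case False then show ?thesis using that[of a] ac bd by (metis DiffD1 DiffD2 DiffI insertCI singletonD)
    qed
    show "\<exists>\<psi>. is_L_colouring {0} adjP (Lr adjP 1 L r) \<psi> \<and> unfrozen {0} adjP (Lr adjP 1 L r) \<psi> \<and>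
            is_L_colouring {0} adjP (Lr adjP 1 L r') \<psi> \<and> unfrozen {0} adjP (Lr adjP 1 L r') \<psi>"
      unfolding col_single unfrozen_single Lr0 using x by (intro exI[of _ "\<lambda>_. x"]) auto
  qed
  show "reconf_equiv {0..1} adjP L \<alpha> \<beta>"
    by (rule rv) (use lists ca cb ua ub conn T_single adjP_sym adjP_irr in \<open>auto simp: adjP_def\<close>)
qed




lemma T_K3:
  "\<forall>L'::nat \<Rightarrow> 'c set. (\<forall>v\<in>{0..2}. finite (L' v) \<and> degree {0..2} adjP v + 1 \<le> card (L' v)) \<longrightarrow>
     (\<forall>\<alpha> \<beta>. is_L_colouring {0..2} adjP L' \<alpha> \<longrightarrow> is_L_colouring {0..2} adjP L' \<beta> \<longrightarrow>
       unfrozen {0..2} adjP L' \<alpha> \<longrightarrow> unfrozen {0..2} adjP L' \<beta> \<longrightarrow> reconf_equiv {0..2} adjP L' \<alpha> \<beta>)"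
proof (intro allI impI)
  fix L :: "nat \<Rightarrow> 'c set" and \<alpha> \<beta>
  assume lists: "\<forall>v\<in>{0..2}. finite (L v) \<and> degree {0..2} adjP v + 1 \<le> card (L v)"
    and ca: "is_L_colouring {0..2} adjP L \<alpha>" and cb: "is_L_colouring {0..2} adjP L \<beta>"
    and ua: "unfrozen {0..2} adjP L \<alpha>" and ub: "unfrozen {0..2} adjP L \<beta>"
  have e: "{0..2::nat} - {2} = {0..1}" by auto
  note rv = remove_vertex[of "{0..2}" 2 adjP L, unfolded e]
  have Lr0: "\<And>r. Lr adjP 2 L r 0 = L 0 - {r}" "\<And>r. Lr adjP 2 L r 1 = L 1 - {r}" by (simp_all add: Lr_def adjP_def)
  have f0: "finite (L 0)" "3 \<le> card (L 0)" using lists[rule_format, of 0] deg_lb2[of 2 0] by auto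
  have f1: "finite (L 1)" "3 \<le> card (L 1)" using lists[rule_format, of 1] deg_lb2[of 2 1] by auto
  have conn: "\<forall>r\<in>L 2. \<forall>r'\<in>L 2. r \<noteq> r' \<longrightarrow>
       (\<exists>\<psi>. is_L_colouring {0..1} adjP (Lr adjP 2 L r) \<psi> \<and> unfrozen {0..1} adjP (Lr adjP 2 L r) \<psi>) \<longrightarrow>
       (\<exists>\<psi>. is_L_colouring {0..1} adjP (Lr adjP 2 L r') \<psi> \<and> unfrozen {0..1} adjP (Lr adjP 2 L r') \<psi>) \<longrightarrow>
       (\<exists>\<psi>. is_L_colouring {0..1} adjP (Lr adjP 2 L r) \<psi> \<and> unfrozen {0..1} adjP (Lr adjP 2 L r) \<psi> \<and>
            is_L_colouring {0..1} adjP (Lr adjP 2 L r') \<psi> \<and> unfrozen {0..1} adjP (Lr adjP 2 L r') \<psi>)"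
  proof (intro ballI impI)
    fix r r' assume rr: "r \<noteq> r'"
      and h1: "\<exists>\<psi>. is_L_colouring {0..1} adjP (Lr adjP 2 L r) \<psi> \<and> unfrozen {0..1} adjP (Lr adjP 2 L r) \<psi>"
      and h2: "\<exists>\<psi>. is_L_colouring {0..1} adjP (Lr adjP 2 L r') \<psi> \<and> unfrozen {0..1} adjP (Lr adjP 2 L r') \<psi>"
    obtain x0 x1 c where X: "x0 \<in> L 0 - {r}" "x1 \<in> L 1 - {r}" "x0 \<noteq> x1" "c \<in> L 0 - {r} \<or> c \<in> L 1 - {r}" "c \<noteq> x0" "c \<noteq> x1"
      using h1 unfolding col_edge unfrozen_edge Lr0 by blast
    obtain y0 y1 d where Y: "y0 \<in> L 0 - {r'}" "y1 \<in> L 1 - {r'}" "y0 \<noteq> y1" "d \<in> L 0 - {r'} \<or> d \<in> L 1 - {r'}" "d \<noteq> y0" "d \<noteq> y1"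
      using h2 unfolding col_edge unfrozen_edge Lr0 by blast
    obtain p q where pq: "p \<in> L 0" "p \<noteq> r" "p \<noteq> r'" "q \<in> L 1" "q \<noteq> r" "q \<noteq> r'" "p \<noteq> q"
    proof -
      obtain a where a: "a \<in> L 0" "a \<noteq> r" "a \<noteq> r'" using pick2[OF f0] by blast
      obtain b where b: "b \<in> L 1" "b \<noteq> r" "b \<noteq> r'" using pick2[OF f1] by blast
      show ?thesis
      proof (cases "a = b")
        case False then show ?thesis using that a b by blast
      next
        case True
        show ?thesis
        proof (cases "\<exists>a'\<in>L 0. a' \<noteq> r \<and> a' \<noteq> r' \<and> a' \<noteq> a")
          case True then show ?thesis using that a b \<open>a = b\<close> by metis
        next
          case F1: False
          show ?thesis
          proof (cases "\<exists>b'\<in>L 1. b' \<noteq> r \<and> b' \<noteq> r' \<and> b' \<noteq> a")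
            case True then show ?thesis using that a b by metis
          next
            case F2: False
            have "x0 \<in> {r', a}" "x1 \<in> {r', a}" "c \<in> {r', a}" using X F1 F2 \<open>a = b\<close> by auto
            then show ?thesis using X by auto
          qed
        qed
      qed
    qed
    let ?\<psi> = "\<lambda>i::nat. if i = 0 then p else q"
    have u1: "\<exists>c'. (c' \<in> L 0 - {r} \<or> c' \<in> L 1 - {r}) \<and> c' \<noteq> p \<and> c' \<noteq> q"
      by (rule bad2[OF X])
    have u2: "\<exists>c'. (c' \<in> L 0 - {r'} \<or> c' \<in> L 1 - {r'}) \<and> c' \<noteq> p \<and> c' \<noteq> q"
      by (rule bad2[OF Y])
    show "\<exists>\<psi>. is_L_colouring {0..1} adjP (Lr adjP 2 L r) \<psi> \<and> unfrozen {0..1} adjP (Lr adjP 2 L r) \<psi> \<and>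
            is_L_colouring {0..1} adjP (Lr adjP 2 L r') \<psi> \<and> unfrozen {0..1} adjP (Lr adjP 2 L r') \<psi>"
      unfolding col_edge unfrozen_edge Lr0 using pq u1 u2 by (intro exI[of _ ?\<psi>]) auto
  qed
  show "reconf_equiv {0..2} adjP L \<alpha> \<beta>"
  proof -
    have fin: "finite {0..2::nat}" by simp
    have zin: "(2::nat) \<in> {0..2}" by simp
    have symm: "\<forall>x\<in>{0..2}. \<forall>y\<in>{0..2}. adjP x y = adjP y x" using adjP_sym by blast
    have irr: "\<not> adjP 2 2" by (simp add: adjP_irr)
    have nb: "\<exists>x\<in>{0..2}. adjP 2 x" by (rule bexI[of _ 0]) (auto simp: adjP_def)
    show ?thesis by (rule rv[OF fin zin symm irr nb lists T_edge conn ca cb ua ub])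
  qed
qed




lemma Lr_top: "2 \<le> n \<Longrightarrow> x \<le> n \<Longrightarrow> Lr adjP (Suc n) L r x = (if x = n then L n - {r} else L x)"
  unfolding Lr_def using adj_top'[of n x] by auto

lemma colLr: "2 \<le> n \<Longrightarrow> is_L_colouring {0..n} adjP (Lr adjP (Suc n) L r) \<psi> \<longleftrightarrow> is_L_colouring {0..n} adjP L \<psi> \<and> \<psi> n \<noteq> r"
  unfolding is_L_colouring_def using Lr_top[of n _ L r] by auto

lemma caseA1:
  assumes k: "2 \<le> k" and LB: "\<forall>x\<le>Suc k. finite (L x) \<and> 3 \<le> card (L x)"
    and e: "e \<in> L k" and c: "c \<in> L (Suc k)" "e \<noteq> c"
    and d1: "d1 \<in> L (Suc k)" "d1 \<noteq> r" "d1 \<noteq> c" "d1 \<noteq> e"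
    and d2: "d2 \<in> L (Suc k)" "d2 \<noteq> r'" "d2 \<noteq> c" "d2 \<noteq> e"
  shows "\<exists>\<psi>. is_L_colouring {0..Suc k} adjP L \<psi> \<and> \<psi> (Suc k) = c \<and>
     unfrozen {0..Suc k} adjP (Lr adjP (Suc (Suc k)) L r) \<psi> \<and> unfrozen {0..Suc k} adjP (Lr adjP (Suc (Suc k)) L r') \<psi>"
proof -
  have LBk: "\<forall>x\<le>k. finite (L x) \<and> 3 \<le> card (L x)" using LB by auto
  obtain \<psi>' where \<psi>': "is_L_colouring {0..k} adjP L \<psi>'" "\<psi>' k = e" using ext_col[OF k] LBk e by blast
  define \<psi> where "\<psi> = \<psi>'(Suc k := c)"
  have col: "is_L_colouring {0..Suc k} adjP L \<psi>" unfolding \<psi>_def using col_extend[OF \<psi>'(1) k c(1)] c \<psi>' by auto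
  have nbk: "\<forall>y\<in>{0..Suc k}. adjP (Suc k) y \<longrightarrow> y = k" using adj_top[OF k] by auto
  have k2: "2 \<le> Suc k" using k by simp
  have u1: "unfrozen {0..Suc k} adjP (Lr adjP (Suc (Suc k)) L r) \<psi>"
  proof (rule unfrozenI[of "Suc k" _ d1])
    show "d1 \<in> Lr adjP (Suc (Suc k)) L r (Suc k)" using Lr_top[OF k2, of "Suc k" L r] d1 by simp
  qed (use d1 nbk \<psi>' in \<open>auto simp: \<psi>_def\<close>)
  have u2: "unfrozen {0..Suc k} adjP (Lr adjP (Suc (Suc k)) L r') \<psi>"
  proof (rule unfrozenI[of "Suc k" _ d2])
    show "d2 \<in> Lr adjP (Suc (Suc k)) L r' (Suc k)" using Lr_top[OF k2, of "Suc k" L r'] d2 by simp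
  qed (use d2 nbk \<psi>' in \<open>auto simp: \<psi>_def\<close>)
  show ?thesis using col u1 u2 by (intro exI[of _ \<psi>]) (simp add: \<psi>_def)
qed

lemma caseB2:
  assumes j: "2 \<le> j" and LB: "\<forall>x\<le>Suc (Suc j). finite (L x) \<and> 3 \<le> card (L x)"
    and f: "f \<in> L j" "f \<noteq> r" "f \<noteq> r'" and r: "r \<in> L (Suc j)" "r' \<in> L (Suc j)" "r \<noteq> r'"
    and c: "c \<in> L (Suc (Suc j))" "c \<noteq> r" "c \<noteq> r'"
  shows "\<exists>\<psi>. is_L_colouring {0..Suc (Suc j)} adjP L \<psi> \<and> \<psi> (Suc (Suc j)) = c \<and>
     unfrozen {0..Suc (Suc j)} adjP (Lr adjP (Suc (Suc (Suc j))) L r) \<psi> \<and>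
     unfrozen {0..Suc (Suc j)} adjP (Lr adjP (Suc (Suc (Suc j))) L r') \<psi>"
proof -
  have LBj: "\<forall>x\<le>j. finite (L x) \<and> 3 \<le> card (L x)" using LB by auto
  obtain \<psi>' where \<psi>': "is_L_colouring {0..j} adjP L \<psi>'" "\<psi>' j = f" using ext_col[OF j] LBj f by blast
  define \<psi>'' where "\<psi>'' = \<psi>'(Suc j := r)"
  have col'': "is_L_colouring {0..Suc j} adjP L \<psi>''" unfolding \<psi>''_def using col_extend[OF \<psi>'(1) j r(1)] f \<psi>' by auto
  define \<psi> where "\<psi> = \<psi>''(Suc (Suc j) := c)"
  have j2: "2 \<le> Suc j" using j by simp
  have col: "is_L_colouring {0..Suc (Suc j)} adjP L \<psi>" unfolding \<psi>_def
    using col_extend[OF col'' j2 c(1)] c by (simp add: \<psi>''_def)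
  have j3: "3 \<le> Suc j" using j by simp
  have nb: "\<forall>y. adjP (Suc j) y \<longrightarrow> y = j \<or> y = Suc (Suc j)" using adj_mid[OF j3] by auto
  have jj: "2 \<le> Suc (Suc j)" using j by simp
  have Lrj: "\<And>q. Lr adjP (Suc (Suc (Suc j))) L q (Suc j) = L (Suc j)" using Lr_top[OF jj, of "Suc j" L] by simp
  have vals: "\<psi> j = f" "\<psi> (Suc j) = r" "\<psi> (Suc (Suc j)) = c" unfolding \<psi>_def \<psi>''_def using \<psi>' by auto
  have u: "unfrozen {0..Suc (Suc j)} adjP (Lr adjP (Suc (Suc (Suc j))) L q) \<psi>" for q
  proof (rule unfrozenI[of "Suc j" _ r'])
    show "r' \<in> Lr adjP (Suc (Suc (Suc j))) L q (Suc j)" using Lrj r by simp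
  qed (use nb vals f c r in auto)
  show ?thesis using col u vals by blast
qed




lemma connN:
  assumes k: "2 \<le> k" and LB: "\<forall>x\<le>Suc k. finite (L x) \<and> 3 \<le> card (L x)" and L2: "4 \<le> card (L 2)"
    and rr: "r \<noteq> r'"
  shows "\<exists>\<psi>. is_L_colouring {0..Suc k} adjP (Lr adjP (Suc (Suc k)) L r) \<psi> \<and> unfrozen {0..Suc k} adjP (Lr adjP (Suc (Suc k)) L r) \<psi> \<and>
            is_L_colouring {0..Suc k} adjP (Lr adjP (Suc (Suc k)) L r') \<psi> \<and> unfrozen {0..Suc k} adjP (Lr adjP (Suc (Suc k)) L r') \<psi>"
proof -
  have k1: "2 \<le> Suc k" using k by simp
  have suff: "\<exists>\<psi>. is_L_colouring {0..Suc k} adjP L \<psi> \<and> \<psi> (Suc k) = c \<and>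
     unfrozen {0..Suc k} adjP (Lr adjP (Suc (Suc k)) L r) \<psi> \<and> unfrozen {0..Suc k} adjP (Lr adjP (Suc (Suc k)) L r') \<psi>
     \<Longrightarrow> c \<noteq> r \<Longrightarrow> c \<noteq> r' \<Longrightarrow> ?thesis" for c
    using colLr[OF k1] by metis
  have fS: "finite (L (Suc k))" "3 \<le> card (L (Suc k))" using LB by auto
  have fk: "finite (L k)" "3 \<le> card (L k)" using LB by auto
  obtain c where c: "c \<in> L (Suc k)" "c \<noteq> r" "c \<noteq> r'" using pick2[OF fS] by blast
  show ?thesis
  proof (cases "\<exists>d\<in>L (Suc k). d \<noteq> r \<and> d \<noteq> r' \<and> d \<noteq> c")
    case True
    then obtain d where d: "d \<in> L (Suc k)" "d \<noteq> r" "d \<noteq> r'" "d \<noteq> c" by blast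
    obtain e where e: "e \<in> L k" "e \<noteq> c" "e \<noteq> d" using pick2[OF fk] by blast
    show ?thesis
      by (rule suff[OF caseA1[OF k LB e(1) c(1) e(2), of d r d r'] c(2,3)]) (use d e in auto)
  next
    case False
    then have uniq: "\<And>x. x \<in> L (Suc k) \<Longrightarrow> x \<noteq> r \<Longrightarrow> x \<noteq> r' \<Longrightarrow> x = c" by blast
    have r'S: "r' \<in> L (Suc k)"
    proof -
      obtain x where "x \<in> L (Suc k)" "x \<noteq> r" "x \<noteq> c" using pick2[OF fS] by blast
      then show ?thesis using uniq by metis
    qed
    have rS: "r \<in> L (Suc k)"
    proof -
      obtain x where "x \<in> L (Suc k)" "x \<noteq> r'" "x \<noteq> c" using pick2[OF fS] by blast
      then show ?thesis using uniq by metis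
    qed
    show ?thesis
    proof (cases "\<exists>e\<in>L k. e \<noteq> r \<and> e \<noteq> r' \<and> e \<noteq> c")
      case True
      then obtain e where e: "e \<in> L k" "e \<noteq> r" "e \<noteq> r'" "e \<noteq> c" by blast
      show ?thesis
        by (rule suff[OF caseA1[OF k LB e(1) c(1) e(4), of r' r r r'] c(2,3)]) (use e c rS r'S rr in auto)
    next
      case F2: False
      have "k \<noteq> 2"
      proof
        assume "k = 2"
        then have fin2: "finite (L 2)" using LB by auto
        obtain x where "x \<in> L 2" "x \<noteq> r" "x \<noteq> r'" "x \<noteq> c" using pick3[OF fin2 L2, of r r' c] by blast
        then show False using F2 \<open>k = 2\<close> by blast
      qed
      then obtain j where kj: "k = Suc j" and j: "2 \<le> j" using k by (cases k) auto
      have rk: "r \<in> L k"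
      proof -
        obtain x where "x \<in> L k" "x \<noteq> r'" "x \<noteq> c" using pick2[OF fk] by blast
        then show ?thesis using F2 by metis
      qed
      have r'k: "r' \<in> L k"
      proof -
        obtain x where "x \<in> L k" "x \<noteq> r" "x \<noteq> c" using pick2[OF fk] by blast
        then show ?thesis using F2 by metis
      qed
      have fj: "finite (L j)" "3 \<le> card (L j)" using LB kj by auto
      obtain f where f: "f \<in> L j" "f \<noteq> r" "f \<noteq> r'" using pick2[OF fj] by blast
      have LB': "\<forall>x\<le>Suc (Suc j). finite (L x) \<and> 3 \<le> card (L x)" using LB kj by simp
      have "\<exists>\<psi>. is_L_colouring {0..Suc (Suc j)} adjP L \<psi> \<and> \<psi> (Suc (Suc j)) = c \<and>
         unfrozen {0..Suc (Suc j)} adjP (Lr adjP (Suc (Suc (Suc j))) L r) \<psi> \<and>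
         unfrozen {0..Suc (Suc j)} adjP (Lr adjP (Suc (Suc (Suc j))) L r') \<psi>"
        by (rule caseB2[OF j LB' f]) (use rk r'k rr c kj in auto)
      then show ?thesis using suff c kj by blast
    qed
  qed
qed

lemma conn3:
  assumes f0: "finite (L 0)" "3 \<le> card (L 0)" and f1: "finite (L 1)" "3 \<le> card (L 1)"
    and f2: "finite (L 2)" "4 \<le> card (L 2)" and rr: "r \<noteq> r'"
    and h1: "\<exists>\<psi>. is_L_colouring {0..2} adjP (Lr adjP 3 L r) \<psi> \<and> unfrozen {0..2} adjP (Lr adjP 3 L r) \<psi>"
    and h2: "\<exists>\<psi>. is_L_colouring {0..2} adjP (Lr adjP 3 L r') \<psi> \<and> unfrozen {0..2} adjP (Lr adjP 3 L r') \<psi>"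
  shows "\<exists>\<psi>. is_L_colouring {0..2} adjP (Lr adjP 3 L r) \<psi> \<and> unfrozen {0..2} adjP (Lr adjP 3 L r) \<psi> \<and>
            is_L_colouring {0..2} adjP (Lr adjP 3 L r') \<psi> \<and> unfrozen {0..2} adjP (Lr adjP 3 L r') \<psi>"
proof -
  have Lr3: "\<And>q. Lr adjP 3 L q 0 = L 0" "\<And>q. Lr adjP 3 L q 1 = L 1" "\<And>q. Lr adjP 3 L q 2 = L 2 - {q}"
    by (simp_all add: Lr_def adjP_def)
  obtain x0 x1 x2 c where X: "x0 \<in> L 0" "x1 \<in> L 1" "x2 \<in> L 2 - {r}" "x0 \<noteq> x1" "x0 \<noteq> x2" "x1 \<noteq> x2"
    "c \<in> L 0 \<or> c \<in> L 1 \<or> c \<in> L 2 - {r}" "c \<noteq> x0" "c \<noteq> x1" "c \<noteq> x2"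
    using h1 unfolding col_K3 unfrozen_K3 Lr3 by blast
  obtain y0 y1 y2 d where Y: "y0 \<in> L 0" "y1 \<in> L 1" "y2 \<in> L 2 - {r'}" "y0 \<noteq> y1" "y0 \<noteq> y2" "y1 \<noteq> y2"
    "d \<in> L 0 \<or> d \<in> L 1 \<or> d \<in> L 2 - {r'}" "d \<noteq> y0" "d \<noteq> y1" "d \<noteq> y2"
    using h2 unfolding col_K3 unfrozen_K3 Lr3 by blast
  have f2': "3 \<le> card (L 2)" using f2 by simp
  obtain s where s: "s \<in> L 2" "s \<noteq> r" "s \<noteq> r'" using pick2[OF f2(1) f2'] by blast
  obtain p where p: "p \<in> L 0" "p \<noteq> s" using pick2[OF f0] by blast
  obtain q where q: "q \<in> L 1" "q \<noteq> s" "q \<noteq> p" using pick2[OF f1] by blast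
  have u1: "\<exists>c'. (c' \<in> L 0 \<or> c' \<in> L 1 \<or> c' \<in> L 2 - {r}) \<and> c' \<noteq> p \<and> c' \<noteq> q \<and> c' \<noteq> s"
    by (rule bad3[OF X])
  have u2: "\<exists>c'. (c' \<in> L 0 \<or> c' \<in> L 1 \<or> c' \<in> L 2 - {r'}) \<and> c' \<noteq> p \<and> c' \<noteq> q \<and> c' \<noteq> s"
    by (rule bad3[OF Y])
  let ?\<psi> = "\<lambda>i::nat. if i = 0 then p else if i = 1 then q else s"
  have a: "?\<psi> 0 = p" "?\<psi> 1 = q" "?\<psi> 2 = s" by auto
  have "is_L_colouring {0..2} adjP (Lr adjP 3 L r) ?\<psi>" "is_L_colouring {0..2} adjP (Lr adjP 3 L r') ?\<psi>"
    unfolding col_K3 Lr3 a using p q s by auto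
  moreover have "unfrozen {0..2} adjP (Lr adjP 3 L r) ?\<psi>" "unfrozen {0..2} adjP (Lr adjP 3 L r') ?\<psi>"
    unfolding unfrozen_K3 Lr3 a using u1 u2 by blast+
  ultimately show ?thesis by blast
qed




lemma T_step:
  assumes n: "2 \<le> n"
    and IH: "\<forall>L'::nat \<Rightarrow> 'c set. (\<forall>v\<in>{0..n}. finite (L' v) \<and> degree {0..n} adjP v + 1 \<le> card (L' v)) \<longrightarrow>
     (\<forall>\<alpha> \<beta>. is_L_colouring {0..n} adjP L' \<alpha> \<longrightarrow> is_L_colouring {0..n} adjP L' \<beta> \<longrightarrow>
       unfrozen {0..n} adjP L' \<alpha> \<longrightarrow> unfrozen {0..n} adjP L' \<beta> \<longrightarrow> reconf_equiv {0..n} adjP L' \<alpha> \<beta>)"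
  shows "\<forall>L'::nat \<Rightarrow> 'c set. (\<forall>v\<in>{0..Suc n}. finite (L' v) \<and> degree {0..Suc n} adjP v + 1 \<le> card (L' v)) \<longrightarrow>
     (\<forall>\<alpha> \<beta>. is_L_colouring {0..Suc n} adjP L' \<alpha> \<longrightarrow> is_L_colouring {0..Suc n} adjP L' \<beta> \<longrightarrow>
       unfrozen {0..Suc n} adjP L' \<alpha> \<longrightarrow> unfrozen {0..Suc n} adjP L' \<beta> \<longrightarrow> reconf_equiv {0..Suc n} adjP L' \<alpha> \<beta>)"
proof (intro allI impI)
  fix L :: "nat \<Rightarrow> 'c set" and \<alpha> \<beta>
  assume lists: "\<forall>v\<in>{0..Suc n}. finite (L v) \<and> degree {0..Suc n} adjP v + 1 \<le> card (L v)"
    and ca: "is_L_colouring {0..Suc n} adjP L \<alpha>" and cb: "is_L_colouring {0..Suc n} adjP L \<beta>"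
    and ua: "unfrozen {0..Suc n} adjP L \<alpha>" and ub: "unfrozen {0..Suc n} adjP L \<beta>"
  have e: "{0..Suc n} - {Suc n} = {0..n}" by auto
  note rv = remove_vertex[of "{0..Suc n}" "Suc n" adjP L, unfolded e]
  have LB: "\<forall>x\<le>n. finite (L x) \<and> 3 \<le> card (L x)"
  proof (intro allI impI)
    fix x assume x: "x \<le> n"
    have "2 \<le> degree {0..Suc n} adjP x" using deg_lb2[of "Suc n" x] n x by simp
    then show "finite (L x) \<and> 3 \<le> card (L x)" using lists[rule_format, of x] x by simp
  qed
  have L2: "4 \<le> card (L 2)"
  proof -
    have "3 \<le> degree {0..Suc n} adjP 2" using deg_lb3[of "Suc n"] n by simp
    then show ?thesis using lists[rule_format, of 2] n by simp
  qed
  have conn: "\<forall>r\<in>L (Suc n). \<forall>r'\<in>L (Suc n). r \<noteq> r' \<longrightarrow>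
       (\<exists>\<psi>. is_L_colouring {0..n} adjP (Lr adjP (Suc n) L r) \<psi> \<and> unfrozen {0..n} adjP (Lr adjP (Suc n) L r) \<psi>) \<longrightarrow>
       (\<exists>\<psi>. is_L_colouring {0..n} adjP (Lr adjP (Suc n) L r') \<psi> \<and> unfrozen {0..n} adjP (Lr adjP (Suc n) L r') \<psi>) \<longrightarrow>
       (\<exists>\<psi>. is_L_colouring {0..n} adjP (Lr adjP (Suc n) L r) \<psi> \<and> unfrozen {0..n} adjP (Lr adjP (Suc n) L r) \<psi> \<and>
            is_L_colouring {0..n} adjP (Lr adjP (Suc n) L r') \<psi> \<and> unfrozen {0..n} adjP (Lr adjP (Suc n) L r') \<psi>)"
  proof (intro ballI impI)
    fix r r' assume rr: "r \<noteq> r'"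
      and h1: "\<exists>\<psi>. is_L_colouring {0..n} adjP (Lr adjP (Suc n) L r) \<psi> \<and> unfrozen {0..n} adjP (Lr adjP (Suc n) L r) \<psi>"
      and h2: "\<exists>\<psi>. is_L_colouring {0..n} adjP (Lr adjP (Suc n) L r') \<psi> \<and> unfrozen {0..n} adjP (Lr adjP (Suc n) L r') \<psi>"
    show "\<exists>\<psi>. is_L_colouring {0..n} adjP (Lr adjP (Suc n) L r) \<psi> \<and> unfrozen {0..n} adjP (Lr adjP (Suc n) L r) \<psi> \<and>
            is_L_colouring {0..n} adjP (Lr adjP (Suc n) L r') \<psi> \<and> unfrozen {0..n} adjP (Lr adjP (Suc n) L r') \<psi>"
    proof (cases "n = 2")
      case True
      have s3: "Suc (2::nat) = 3" by simp
      have h1': "\<exists>\<psi>. is_L_colouring {0..2} adjP (Lr adjP 3 L r) \<psi> \<and> unfrozen {0..2} adjP (Lr adjP 3 L r) \<psi>"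
        using h1 unfolding True s3 .
      have h2': "\<exists>\<psi>. is_L_colouring {0..2} adjP (Lr adjP 3 L r') \<psi> \<and> unfrozen {0..2} adjP (Lr adjP 3 L r') \<psi>"
        using h2 unfolding True s3 .
      have f0: "finite (L 0)" "3 \<le> card (L 0)" using LB by auto
      have f1: "finite (L 1)" "3 \<le> card (L 1)" using LB True by auto
      have f2: "finite (L 2)" using LB True by auto
      show ?thesis unfolding True s3 by (rule conn3[OF f0 f1 f2 L2 rr h1' h2'])
    next
      case False
      then obtain k where k: "n = Suc k" "2 \<le> k" using n by (cases n) auto
      have LB': "\<forall>x\<le>Suc k. finite (L x) \<and> 3 \<le> card (L x)" using LB k by simp
      show ?thesis unfolding k(1) by (rule connN[OF k(2) LB' L2 rr])
    qed
  qed
  have fin: "finite {0..Suc n}" by simp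
  have zin: "Suc n \<in> {0..Suc n}" by simp
  have symm: "\<forall>x\<in>{0..Suc n}. \<forall>y\<in>{0..Suc n}. adjP x y = adjP y x" using adjP_sym by blast
  have irr: "\<not> adjP (Suc n) (Suc n)" by (simp add: adjP_irr)
  have nb: "\<exists>x\<in>{0..Suc n}. adjP (Suc n) x" using adj_top[OF n, of n] by auto
  show "reconf_equiv {0..Suc n} adjP L \<alpha> \<beta>" by (rule rv[OF fin zin symm irr nb lists IH conn ca cb ua ub])
qed

lemma T_all:
  assumes "2 \<le> n"
  shows "\<forall>L'::nat \<Rightarrow> 'c set. (\<forall>v\<in>{0..n}. finite (L' v) \<and> degree {0..n} adjP v + 1 \<le> card (L' v)) \<longrightarrow>
     (\<forall>\<alpha> \<beta>. is_L_colouring {0..n} adjP L' \<alpha> \<longrightarrow> is_L_colouring {0..n} adjP L' \<beta> \<longrightarrow>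
       unfrozen {0..n} adjP L' \<alpha> \<longrightarrow> unfrozen {0..n} adjP L' \<beta> \<longrightarrow> reconf_equiv {0..n} adjP L' \<alpha> \<beta>)"
  using assms
proof (induction n rule: dec_induct)
  case base then show ?case by (rule T_K3)
next
  case (step n) then show ?case using T_step by blast
qed

lemma cong_defs:
  assumes h: "\<forall>x\<in>V. \<forall>y\<in>V. E x y = E' x y"
  shows "v \<in> V \<Longrightarrow> degree V E v = degree V E' v"
    and "is_L_colouring V E L \<phi> = is_L_colouring V E' L \<phi>"
    and "unfrozen V E L \<phi> = unfrozen V E' L \<phi>"
    and "reconf_equiv V E L \<alpha> \<beta> = reconf_equiv V E' L \<alpha> \<beta>"
proof -
  show "v \<in> V \<Longrightarrow> degree V E v = degree V E' v"
    unfolding degree_def using h by (metis (mono_tags, lifting) Collect_cong)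
  show c: "is_L_colouring V E L \<phi> = is_L_colouring V E' L \<phi>" for \<phi>
    unfolding is_L_colouring_def using h by auto
  have f: "frozen V E L \<phi> v = frozen V E' L \<phi> v" if "v \<in> V" for v
    unfolding frozen_def using h that by auto
  show "unfrozen V E L \<phi> = unfrozen V E' L \<phi>"
    unfolding unfrozen_def using f by auto
  have "recolour_step V E L = recolour_step V E' L"
    unfolding recolour_step_def using c by (intro ext) auto
  then show "reconf_equiv V E L \<alpha> \<beta> = reconf_equiv V E' L \<alpha> \<beta>"
    unfolding reconf_equiv_def by simp
qed

theorem mainTheorem16:
  fixes n :: nat and L :: "nat \<Rightarrow> 'c set" and \<alpha> \<beta> :: "nat \<Rightarrow> 'c"
  assumes "n \<ge> 3"
    and "\<forall>v\<in>paw_vertices n. finite (L v)"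
    and "\<forall>v\<in>paw_vertices n. card (L v) \<ge> degree (paw_vertices n) (paw_adj n) v + 1"
    and "is_L_colouring (paw_vertices n) (paw_adj n) L \<alpha>"
    and "is_L_colouring (paw_vertices n) (paw_adj n) L \<beta>"
    and "unfrozen (paw_vertices n) (paw_adj n) L \<alpha>"
    and "unfrozen (paw_vertices n) (paw_adj n) L \<beta>"
  shows "reconf_equiv (paw_vertices n) (paw_adj n) L \<alpha> \<beta>"
proof -
  have h: "\<forall>x\<in>{0..n}. \<forall>y\<in>{0..n}. paw_adj n x y = adjP x y" using paw_adj_eq by auto
  note cg = cong_defs[OF h]
  have V: "paw_vertices n = {0..n}" by (simp add: paw_vertices_def)
  have lists: "\<forall>v\<in>{0..n}. finite (L v) \<and> degree {0..n} adjP v + 1 \<le> card (L v)"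
    using assms(2,3) cg(1) unfolding V by auto
  have n2: "2 \<le> n" using assms(1) by simp
  have "reconf_equiv {0..n} adjP L \<alpha> \<beta>"
    using T_all[OF n2] lists assms(4-7) unfolding V cg(2,3) by blast
  then show ?thesis unfolding V cg(4) .
qed


end
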